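(* Let $(\mathscr{A},\star')$ be a left-non-degenerate weak RC-system on a quiver $\mathscr{A}$ over $\Lambda$. For composable $a|b$ define $a\rightharpoonup b:=c$ where $c$ is the unique arrow with $b=a\star' c$, and $a\leftharpoonup b:=(a\rightharpoonup b)\star' a$. Then $\sigma\colon a|b\mapsto(a\rightharpoonup b)|(a\leftharpoonup b)$ is a quiver-theoretic Yang--Baxter map on $\mathscr{A}$.
   Context: A weak RC-system $(Q,\star)$ is a quiver with a partial binary operation such that: $x\star y$ is defined only if $\mathfrak{s}(x)=\mathfrak{s}(y)$; whenever $x\star y$ is defined, $y\star x$ is defined, $\mathfrak{s}(x\star y)=\mathfrak{t}(x)$, $\mathfrak{s}(y\star x)=\mathfrak{t}(y)$, $\mathfrak{t}(x\star y)=\mathfrak{t}(y\star x)$; and whenever $x\star y$, $x\star z$, $(x\star y)\star(x\star z)$ are defined, $y\star z$ and $(y\star x)\star(y\star z)$ are defined and $(x\star y)\star(x\star z)=(y\star x)\star(y\star z)$. It is left-non-degenerate if each map $x\star\cdot\colon Q(\mathfrak{s}(x),\Lambda)\to Q(\mathfrak{t}(x),\Lambda)$ is a bijection ($Q(\lambda,\Lambda)$ = arrows with source $\lambda$). A quiver-theoretic Yang--Baxter map is a map $\sigma$ on the set of composable pairs $a|b$ ($\mathfrak{t}(a)=\mathfrak{s}(b)$) preserving the source of the first and target of the second arrow, satisfying $(\sigma\otimes\mathrm{id})(\mathrm{id}\otimes\sigma)(\sigma\otimes\mathrm{id})=(\mathrm{id}\otimes\sigma)(\sigma\otimes\mathrm{id})(\mathrm{id}\otimes\sigma)$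 on composable triples. *)

theory Defs
  imports Main
begin

definition quiver :: "'v set \<Rightarrow> 'a set \<Rightarrow> ('a \<Rightarrow> 'v) \<Rightarrow> ('a \<Rightarrow> 'v) \<Rightarrow> bool" where
  "quiver L Q s t \<longleftrightarrow> (\<forall>x\<in>Q. s x \<in> L \<and> t x \<in> L)"

definition weak_RC_system ::
  "'v set \<Rightarrow> 'a set \<Rightarrow> ('a \<Rightarrow> 'v) \<Rightarrow> ('a \<Rightarrow> 'v) \<Rightarrow> ('a \<Rightarrow> 'a \<Rightarrow> 'a option) \<Rightarrow> bool" where
  "weak_RC_system L Q s t op \<longleftrightarrow>
     quiver L Q s t \<and>
     \<comment> \<open>partial binary operation on Q, defined only if sources agree\<close>
     (\<forall>x y w. op x y = Some w \<longrightarrow> x \<in> Q \<and> y \<in> Q \<and> w \<in> Q \<and> s x = s y) \<and>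
     (\<forall>x\<in>Q. \<forall>y\<in>Q. \<forall>xy. op x y = Some xy \<longrightarrow>
        (\<exists>yx. op y x = Some yx \<and> s xy = t x \<and> s yx = t y \<and> t xy = t yx)) \<and>
     (\<forall>x\<in>Q. \<forall>y\<in>Q. \<forall>z\<in>Q. \<forall>xy xz w.
        op x y = Some xy \<and> op x z = Some xz \<and> op xy xz = Some w \<longrightarrow>
        (\<exists>yz yx. op y z = Some yz \<and> op y x = Some yx \<and> op yx yz = Some w))"

definition left_non_degenerate ::
  "'a set \<Rightarrow> ('a \<Rightarrow> 'v) \<Rightarrow> ('a \<Rightarrow> 'v) \<Rightarrow> ('a \<Rightarrow> 'a \<Rightarrow> 'a option) \<Rightarrow> bool" where
  "left_non_degenerate Q s t op \<longleftrightarrow>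
     (\<forall>x\<in>Q. (\<forall>y\<in>Q. s y = s x \<longrightarrow> op x y \<noteq> None) \<and>
        bij_betw (\<lambda>y. the (op x y)) {y\<in>Q. s y = s x} {y\<in>Q. s y = t x})"

definition rharp :: "'a set \<Rightarrow> ('a \<Rightarrow> 'v) \<Rightarrow> ('a \<Rightarrow> 'a \<Rightarrow> 'a option) \<Rightarrow> 'a \<Rightarrow> 'a \<Rightarrow> 'a" where
  "rharp Q s op a b = (THE c. c \<in> Q \<and> s c = s a \<and> op a c = Some b)"

definition lharp :: "'a set \<Rightarrow> ('a \<Rightarrow> 'v) \<Rightarrow> ('a \<Rightarrow> 'a \<Rightarrow> 'a option) \<Rightarrow> 'a \<Rightarrow> 'a \<Rightarrow> 'a" where
  "lharp Q s op a b = the (op (rharp Q s op a b) a)"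

definition derived_map :: "'a set \<Rightarrow> ('a \<Rightarrow> 'v) \<Rightarrow> ('a \<Rightarrow> 'a \<Rightarrow> 'a option) \<Rightarrow> 'a \<times> 'a \<Rightarrow> 'a \<times> 'a" where
  "derived_map Q s op = (\<lambda>(a, b). (rharp Q s op a b, lharp Q s op a b))"

definition composable_pairs :: "'a set \<Rightarrow> ('a \<Rightarrow> 'v) \<Rightarrow> ('a \<Rightarrow> 'v) \<Rightarrow> ('a \<times> 'a) set" where
  "composable_pairs Q s t = {(a, b). a \<in> Q \<and> b \<in> Q \<and> t a = s b}"

definition composable_triples :: "'a set \<Rightarrow> ('a \<Rightarrow> 'v) \<Rightarrow> ('a \<Rightarrow> 'v) \<Rightarrow> ('a \<times> 'a \<times> 'a) set" where
  "composable_triples Q s t = {(a, b, c). a \<in> Q \<and> b \<in> Q \<and> c \<in> Q \<and> t a = s b \<and> t b = s c}"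

definition sigma12 :: "('a \<times> 'a \<Rightarrow> 'a \<times> 'a) \<Rightarrow> 'a \<times> 'a \<times> 'a \<Rightarrow> 'a \<times> 'a \<times> 'a" where
  "sigma12 \<sigma> = (\<lambda>(a, b, c). (fst (\<sigma> (a, b)), snd (\<sigma> (a, b)), c))"

definition sigma23 :: "('a \<times> 'a \<Rightarrow> 'a \<times> 'a) \<Rightarrow> 'a \<times> 'a \<times> 'a \<Rightarrow> 'a \<times> 'a \<times> 'a" where
  "sigma23 \<sigma> = (\<lambda>(a, b, c). (a, fst (\<sigma> (b, c)), snd (\<sigma> (b, c))))"

definition quiver_YB_map ::
  "'a set \<Rightarrow> ('a \<Rightarrow> 'v) \<Rightarrow> ('a \<Rightarrow> 'v) \<Rightarrow> ('a \<times> 'a \<Rightarrow> 'a \<times> 'a) \<Rightarrow> bool" where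
  "quiver_YB_map Q s t \<sigma> \<longleftrightarrow>
     (\<forall>p\<in>composable_pairs Q s t.
        \<sigma> p \<in> composable_pairs Q s t \<and>
        s (fst (\<sigma> p)) = s (fst p) \<and> t (snd (\<sigma> p)) = t (snd p)) \<and>
     (\<forall>x\<in>composable_triples Q s t.
        sigma12 \<sigma> (sigma23 \<sigma> (sigma12 \<sigma> x)) = sigma23 \<sigma> (sigma12 \<sigma> (sigma23 \<sigma> x)))"

end

theory Submission
  imports Defs
begin

locale lndrc =
  fixes L :: "'v set" and Q :: "'a set" and s t :: "'a \<Rightarrow> 'v"
    and op :: "'a \<Rightarrow> 'a \<Rightarrow> 'a option"
  assumes W: "weak_RC_system L Q s t op"
    and N: "left_non_degenerate Q s t op"
begin

definition st where "st x y = the (op x y)"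

lemma defd: "x \<in> Q \<Longrightarrow> y \<in> Q \<Longrightarrow> s y = s x \<Longrightarrow> op x y = Some (st x y)"
  using N unfolding left_non_degenerate_def st_def by auto

lemma stQ: "x \<in> Q \<Longrightarrow> y \<in> Q \<Longrightarrow> s y = s x \<Longrightarrow> st x y \<in> Q"
  using defd W unfolding weak_RC_system_def by metis

lemma W2: "\<forall>x\<in>Q. \<forall>y\<in>Q. \<forall>xy. op x y = Some xy \<longrightarrow>
        (\<exists>yx. op y x = Some yx \<and> s xy = t x \<and> s yx = t y \<and> t xy = t yx)"
  using W unfolding weak_RC_system_def by (rule conjunct1[OF conjunct2[OF conjunct2]])

lemma W3: "\<forall>x\<in>Q. \<forall>y\<in>Q. \<forall>z\<in>Q. \<forall>xy xz w.
        op x y = Some xy \<and> op x z = Some xz \<and> op xy xz = Some w \<longrightarrow>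
        (\<exists>yz yx. op y z = Some yz \<and> op y x = Some yx \<and> op yx yz = Some w)"
  using W unfolding weak_RC_system_def by (rule conjunct2[OF conjunct2[OF conjunct2]])

lemma st_prop: "x \<in> Q \<Longrightarrow> y \<in> Q \<Longrightarrow> s y = s x \<Longrightarrow> s (st x y) = t x \<and> t (st x y) = t (st y x)"
proof -
  assume a: "x \<in> Q" "y \<in> Q" "s y = s x"
  have 1: "op x y = Some (st x y)" "op y x = Some (st y x)" using defd a by auto
  obtain yx where "op y x = Some yx" "s (st x y) = t x" "t (st x y) = t yx"
    using W2 a(1,2) 1(1) by blast
  then show ?thesis using 1 by simp
qed

lemma st_s: "x \<in> Q \<Longrightarrow> y \<in> Q \<Longrightarrow> s y = s x \<Longrightarrow> s (st x y) = t x"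
  using st_prop by blast

lemma st_t: "x \<in> Q \<Longrightarrow> y \<in> Q \<Longrightarrow> s y = s x \<Longrightarrow> t (st x y) = t (st y x)"
  using st_prop by blast

lemma RC: "x \<in> Q \<Longrightarrow> y \<in> Q \<Longrightarrow> z \<in> Q \<Longrightarrow> s y = s x \<Longrightarrow> s z = s x \<Longrightarrow>
   st (st x y) (st x z) = st (st y x) (st y z)"
proof -
  assume a: "x \<in> Q" "y \<in> Q" "z \<in> Q" "s y = s x" "s z = s x"
  have 1: "op x y = Some (st x y)" "op x z = Some (st x z)" "op y x = Some (st y x)"
     "op y z = Some (st y z)" using defd a by auto
  have sxy: "s (st x y) = t x" "s (st x z) = t x" using st_s a by auto
  have 2: "op (st x y) (st x z) = Some (st (st x y) (st x z))"
    using defd[OF stQ[OF a(1,2,4)] stQ[OF a(1,3,5)]] sxy by simp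
  obtain yz yx where h: "op y z = Some yz" "op y x = Some yx" "op yx yz = Some (st (st x y) (st x z))"
  proof -
    have "\<exists>yz yx. op y z = Some yz \<and> op y x = Some yx \<and> op yx yz = Some (st (st x y) (st x z))"
      using W3[rule_format, OF a(1) a(2) a(3)] 1(1,2) 2 by simp
    then show ?thesis using that by blast
  qed
  have "yz = st y z" "yx = st y x" using h 1 by simp_all
  then have "op (st y x) (st y z) = Some (st (st x y) (st x z))" using h by simp
  then show ?thesis unfolding st_def[of "st y x"] by simp
qed

lemma bij: "x \<in> Q \<Longrightarrow> bij_betw (st x) {y\<in>Q. s y = s x} {y\<in>Q. s y = t x}"
  using N unfolding left_non_degenerate_def st_def[abs_def] by auto

lemma rh: "a \<in> Q \<Longrightarrow> c \<in> Q \<Longrightarrow> s c = s a \<Longrightarrow> rharp Q s op a (st a c) = c"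
  unfolding rharp_def
proof (rule the_equality)
  assume a: "a \<in> Q" "c \<in> Q" "s c = s a"
  show "c \<in> Q \<and> s c = s a \<and> op a c = Some (st a c)" using a defd by auto
  fix d assume d: "d \<in> Q \<and> s d = s a \<and> op a d = Some (st a c)"
  then have "st a d = st a c" by (simp add: st_def)
  then show "d = c" using bij[OF a(1)] d a unfolding bij_betw_def inj_on_def by auto
qed

lemma dm: "a \<in> Q \<Longrightarrow> c \<in> Q \<Longrightarrow> s c = s a \<Longrightarrow> derived_map Q s op (a, st a c) = (c, st c a)"
proof -
  assume a: "a \<in> Q" "c \<in> Q" "s c = s a"
  have "derived_map Q s op (a, st a c) = (rharp Q s op a (st a c), the (op (rharp Q s op a (st a c)) a))"
    unfolding derived_map_def lharp_def by simp
  then show ?thesis using rh[OF a] by (simp add: st_def)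
qed

lemma surj: "a \<in> Q \<Longrightarrow> b \<in> Q \<Longrightarrow> s b = t a \<Longrightarrow> \<exists>c. c \<in> Q \<and> s c = s a \<and> b = st a c"
  using bij[of a] unfolding bij_betw_def by auto

lemma main: "quiver_YB_map Q s t (derived_map Q s op)"
  unfolding quiver_YB_map_def
proof (rule conjI; rule ballI)
  fix p assume p: "p \<in> composable_pairs Q s t"
  then obtain a b where ab: "p = (a, b)" "a \<in> Q" "b \<in> Q" "t a = s b"
    unfolding composable_pairs_def by auto
  then obtain c where c: "c \<in> Q" "s c = s a" "b = st a c" using surj by metis
  show "derived_map Q s op p \<in> composable_pairs Q s t \<and>
        s (fst (derived_map Q s op p)) = s (fst p) \<and>
        t (snd (derived_map Q s op p)) = t (snd p)"
  proof -
    have "derived_map Q s op p = (c, st c a)" using ab c dm by simp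
    moreover have "st c a \<in> Q" "s (st c a) = t c" "t (st c a) = t (st a c)"
      using ab c stQ st_s st_t by auto
    ultimately show ?thesis using ab c unfolding composable_pairs_def by auto
  qed
next
  fix x assume x: "x \<in> composable_triples Q s t"
  then obtain a b e where abe: "x = (a, b, e)" "a \<in> Q" "b \<in> Q" "e \<in> Q" "t a = s b" "t b = s e"
    unfolding composable_triples_def by auto
  then obtain c where c: "c \<in> Q" "s c = s a" "b = st a c" using surj by metis
  have bQ: "st a c \<in> Q" using c abe stQ by auto
  obtain f where f: "f \<in> Q" "s f = s (st a c)" "e = st (st a c) f"
  proof -
    have se: "s e = t (st a c)" using abe(6) c(3) by simp
    show ?thesis using surj[OF bQ abe(4) se] that by blast
  qed
  have sf: "s f = t a" using f(2) st_s[OF abe(2) c(1) c(2)] by simp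
  obtain g where g: "g \<in> Q" "s g = s a" "f = st a g" using surj[OF abe(2) f(1) sf] by metis
  note Q = abe(2) c(1) g(1)
  have ss: "s c = s a" "s g = s a" by (fact c(2), fact g(2))
  have e: "e = st (st a c) (st a g)" using f g by simp
  show "sigma12 (derived_map Q s op) (sigma23 (derived_map Q s op) (sigma12 (derived_map Q s op) x)) =
        sigma23 (derived_map Q s op) (sigma12 (derived_map Q s op) (sigma23 (derived_map Q s op) x))"
  proof -
    let ?d = "derived_map Q s op"
    have r1: "st (st a c) (st a g) = st (st c a) (st c g)" by (rule RC) (use Q ss in auto)
    have r2: "st (st c g) (st c a) = st (st g c) (st g a)" by (rule RC) (use Q ss in auto)
    have r3: "st (st a g) (st a c) = st (st g a) (st g c)" by (rule RC) (use Q ss in auto)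
    have q: "st c a \<in> Q" "st c g \<in> Q" "st a g \<in> Q" "st a c \<in> Q" "st g a \<in> Q" "st g c \<in> Q"
      using stQ Q ss by auto
    have sq: "s (st c g) = s (st c a)" "s (st a c) = s (st a g)" "s (st g c) = s (st g a)"
      using st_s Q ss by auto
    have d1: "?d (a, st a c) = (c, st c a)" using Q ss by (intro dm) auto
    have d2: "?d (st c a, st (st c a) (st c g)) = (st c g, st (st c g) (st c a))"
      using q sq by (intro dm) auto
    have d3: "?d (c, st c g) = (g, st g c)" using Q ss by (intro dm) auto
    have d4: "?d (st a c, st (st a c) (st a g)) = (st a g, st (st a g) (st a c))"
      using q sq by (intro dm) auto
    have d5: "?d (a, st a g) = (g, st g a)" using Q ss by (intro dm) auto
    have d6: "?d (st g a, st (st g a) (st g c)) = (st g c, st (st g c) (st g a))"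
      using q sq by (intro dm) auto
    have L: "sigma12 ?d (sigma23 ?d (sigma12 ?d x)) = (g, st g c, st (st g c) (st g a))"
      unfolding abe(1) c(3) e sigma12_def sigma23_def
      by (simp only: prod.case fst_conv snd_conv d1 r1 d2 d3 r2)
    have R: "sigma23 ?d (sigma12 ?d (sigma23 ?d x)) = (g, st g c, st (st g c) (st g a))"
      unfolding abe(1) c(3) e sigma12_def sigma23_def
      by (simp only: prod.case fst_conv snd_conv d4 r3 d5 d6)
    show ?thesis using L R by simp
  qed
qed

end

theorem proposition6p4:
  fixes L :: "'v set" and Q :: "'a set" and s t :: "'a \<Rightarrow> 'v"
    and op :: "'a \<Rightarrow> 'a \<Rightarrow> 'a option"
  assumes "weak_RC_system L Q s t op"
    and "left_non_degenerate Q s t op"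
  shows "quiver_YB_map Q s t (derived_map Q s op)"
proof -
  interpret lndrc L Q s t op using assms by unfold_locales
  show ?thesis by (rule main)
qed

end
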